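(* Assume the event $\mathcal{E}$ holds. Then the radius used by ILESS satisfies $$\sigma_{\mathrm{ILESS}} \le 6\frac{A}{m} + 3\sqrt{\frac{A}{m}\, R(f^* )} = O\!\left(\frac{A}{m} + \sqrt{\frac{A}{m}\, R(f^* )}\right),$$ where $f^*$ is any true risk minimizer in $\mathcal{F}$.
   Context: Let $\mathcal{F}$ be a hypothesis class of binary classifiers $\mathcal{X}\to\{\pm1\}$ with finite VC dimension $d$. Let $\mathcal{P}_{X,Y}$ be an unknown distribution on $\mathcal{X}\times\{\pm1\}$, and let $S_m$ be an i.i.d. sample of size $m$ from it. With the 0/1 loss, $R(f)=\Pr(f(X)\neq Y)$ is the true risk and $\hat R(f)=\hat R(f,S_m)$ is the empirical risk on $S_m$. $\hat f$ is an empirical risk minimizer over $\mathcal{F}$, and $f^*$ is a true risk minimizer over $\mathcal{F}$ (assumed to exist). Fix a confidence parameter $0<\delta<1$ and set $A \triangleq 4d\ln\!\big(\tfrac{16me}{d\delta}\big)$. The event $\mathcal{E}$ is the event that, simultaneously for every $f\in\mathcal{F}$, both of the following hold: $$R(f)\le \hat R(f)+\min\Big\{\tfrac{A}{m}+\sqrt{\tfrac{A}{m}\hat R(f)},\ \sqrt{\tfrac{A}{m}R(f)}\Big\},$$ $$\hat R(f)\le R(f)+\min\Big\{\tfrac{A}{m}+\sqrt{\tfrac{A}{m}R(f)},\ \sqrt{\tfrac{A}{m}\hat R(f)}\Big\}.$$ This event has probability at least $1-\delta$ (a uniform convergence bound of Dasgupta et al., based on Bousquet et al., combined with Sauer's lemma).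 The radius used by ILESS is $$\sigma_{\mathrm{ILESS}}=\frac{A}{m}+\sqrt{\frac{A}{m}\hat R(\hat f)}+\frac{A}{m}+\sqrt{\frac{A}{m}\Big[\hat R(\hat f)+\frac{A}{m}+\sqrt{\frac{A}{m}\hat R(\hat f)}\Big]}.$$ *)

theory Defs
  imports "HOL-Probability.Probability"
begin

text \<open>Binary classifiers X -> {+1,-1} are modelled as functions into int whose
values lie in {-1,1}; labelled examples are pairs (x,y) with y in {-1,1}.\<close>

definition shatters :: "('x \<Rightarrow> int) set \<Rightarrow> 'x set \<Rightarrow> bool" where
  "shatters F C \<longleftrightarrow> (\<forall>D\<subseteq>C. \<exists>f\<in>F. \<forall>x\<in>C. (f x = 1 \<longleftrightarrow> x \<in> D))"

definition VC_dim_is :: "('x \<Rightarrow> int) set \<Rightarrow> nat \<Rightarrow> bool" where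
  "VC_dim_is F d \<longleftrightarrow>
     (\<exists>C. finite C \<and> card C = d \<and> shatters F C) \<and>
     (\<forall>C. finite C \<and> shatters F C \<longrightarrow> card C \<le> d)"

definition true_risk :: "('x \<times> int) measure \<Rightarrow> ('x \<Rightarrow> int) \<Rightarrow> real" where
  "true_risk P f = measure P {z \<in> space P. f (fst z) \<noteq> snd z}"

definition emp_risk :: "('x \<times> int) list \<Rightarrow> ('x \<Rightarrow> int) \<Rightarrow> real" where
  "emp_risk S f = real (card {i. i < length S \<and> f (fst (S ! i)) \<noteq> snd (S ! i)}) / real (length S)"

definition A_const :: "nat \<Rightarrow> nat \<Rightarrow> real \<Rightarrow> real" where
  "A_const d m \<delta> = 4 * real d * ln (16 * real m * exp 1 / (real d * \<delta>))"

definition event_E ::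
  "('x \<Rightarrow> int) set \<Rightarrow> ('x \<times> int) measure \<Rightarrow> ('x \<times> int) list \<Rightarrow> real \<Rightarrow> bool" where
  "event_E F P S A \<longleftrightarrow> (\<forall>f\<in>F.
     let m = real (length S); R = true_risk P f; Rh = emp_risk S f in
     R \<le> Rh + min (A / m + sqrt (A / m * Rh)) (sqrt (A / m * R)) \<and>
     Rh \<le> R + min (A / m + sqrt (A / m * R)) (sqrt (A / m * Rh)))"

definition sigma_ILESS :: "real \<Rightarrow> nat \<Rightarrow> real \<Rightarrow> real" where
  "sigma_ILESS A m Rh =
     A / real m + sqrt (A / real m * Rh) + A / real m
     + sqrt (A / real m * (Rh + A / real m + sqrt (A / real m * Rh)))"

end

theory Submission
  imports Defs
begin

lemma sqrt_le_of_sq: "0 \<le> y \<Longrightarrow> x \<le> y^2 \<Longrightarrow> sqrt x \<le> y"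
  by (metis abs_of_nonneg real_sqrt_abs real_sqrt_le_mono)

theorem lemma4:
  fixes F :: "('x \<Rightarrow> int) set" and P :: "('x \<times> int) measure"
    and S :: "('x \<times> int) list" and d m :: nat and \<delta> :: real
    and f_hat f_star :: "'x \<Rightarrow> int"
  assumes F_binary: "\<forall>f\<in>F. \<forall>x. f x \<in> {-1, 1}"
    and VC: "VC_dim_is F d"
    and P_prob: "prob_space P"
    and P_labels: "snd ` space P \<subseteq> {-1, 1}"
    and S_len: "length S = m" and m_pos: "m > 0"
    and S_in: "set S \<subseteq> space P"
    and \<delta>_range: "0 < \<delta>" "\<delta> < 1"
    and ERM: "f_hat \<in> F" "\<forall>f\<in>F. emp_risk S f_hat \<le> emp_risk S f"
    and TRM: "f_star \<in> F" "\<forall>f\<in>F. true_risk P f_star \<le> true_risk P f"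
    and E: "event_E F P S (A_const d m \<delta>)"
  shows "sigma_ILESS (A_const d m \<delta>) m (emp_risk S f_hat)
           \<le> 6 * (A_const d m \<delta> / real m)
             + 3 * sqrt (A_const d m \<delta> / real m * true_risk P f_star)"
proof -
  define a where "a = A_const d m \<delta> / real m"
  define R where "R = true_risk P f_star"
  define Rs where "Rs = emp_risk S f_star"
  define Rh where "Rh = emp_risk S f_hat"
  have R0: "R \<ge> 0" unfolding R_def true_risk_def by simp
  have Rs0: "Rs \<ge> 0" unfolding Rs_def emp_risk_def by simp
  have Rh0: "Rh \<ge> 0" unfolding Rh_def emp_risk_def by simp
  have Es: "R \<le> Rs + min (a + sqrt (a * Rs)) (sqrt (a * R)) \<and>
     Rs \<le> R + min (a + sqrt (a * R)) (sqrt (a * Rs))"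
    using E TRM(1) S_len unfolding event_E_def a_def R_def Rs_def Let_def by auto
  have a0: "a \<ge> 0"
  proof (rule ccontr)
    assume "\<not> a \<ge> 0"
    then have "a < 0" by simp
    then have "sqrt (a*Rs) \<le> 0" "sqrt (a*R) \<le> 0"
      using R0 Rs0 by (simp_all add: mult_nonpos_nonneg)
    then show False using Es \<open>a < 0\<close> by linarith
  qed
  define r where "r = sqrt (a * R)"
  have r0: "r \<ge> 0" unfolding r_def using a0 R0 by simp
  have r2: "r^2 = a * R" unfolding r_def using a0 R0 by simp
  have "Rh \<le> Rs" using ERM TRM(1) unfolding Rh_def Rs_def by auto
  then have RhB: "Rh \<le> R + a + r" using Es unfolding r_def by linarith
  have s1: "sqrt (a * Rh) \<le> 1.5*a + 1.5*r"
  proof (rule sqrt_le_of_sq)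
    show "0 \<le> 1.5*a + 1.5*r" using a0 r0 by simp
    have "a * Rh \<le> a * (R + a + r)" using RhB a0 by (simp add: mult_left_mono)
    also have "\<dots> \<le> (1.5*a + 1.5*r)^2"
    proof -
      have "0 \<le> a*a" "0 \<le> a*r" "0 \<le> r*r" using a0 r0 by auto
      then show ?thesis using r2 unfolding power2_eq_square by (simp add: algebra_simps, linarith)
    qed
    finally show "a * Rh \<le> (1.5*a + 1.5*r)^2" .
  qed
  have s2: "sqrt (a * (Rh + a + sqrt (a * Rh))) \<le> r + 2*a"
  proof (rule sqrt_le_of_sq)
    show "0 \<le> r + 2*a" using a0 r0 by simp
    have "a * (Rh + a + sqrt (a * Rh)) \<le> a * ((R + a + r) + a + (1.5*a + 1.5*r))"
      using RhB s1 a0 by (intro mult_left_mono) auto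
    also have "\<dots> \<le> (r + 2*a)^2"
    proof -
      have "0 \<le> a*a" "0 \<le> a*r" "0 \<le> r*r" using a0 r0 by auto
      then show ?thesis using r2 unfolding power2_eq_square by (simp add: algebra_simps, linarith)
    qed
    finally show "a * (Rh + a + sqrt (a * Rh)) \<le> (r + 2*a)^2" .
  qed
  have "sigma_ILESS (A_const d m \<delta>) m Rh = 2*a + sqrt (a * Rh) + sqrt (a * (Rh + a + sqrt (a * Rh)))"
    unfolding sigma_ILESS_def a_def by simp
  also have "\<dots> \<le> 6*a + 3*r" using s1 s2 a0 r0 by linarith
  finally show ?thesis unfolding a_def r_def R_def Rh_def .
qed

end
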